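(* For every path $P$ on at least $4$ vertices, $4\le\pi_T(P)\le 5$.
   Context: A sequence is nonrepetitive if no block of consecutive terms has the form $r_1\dots r_nr_1\dots r_n$ with $n\ge1$. A (strong) total Thue colouring of a graph $G$ is a colouring of $V(G)\cup E(G)$ such that for every path $v_1,e_1,v_2,\dots,e_{k-1},v_k$ in $G$ the sequence of colours of $v_1,e_1,\dots,v_k$ is nonrepetitive, the sequence of colours of $v_1,\dots,v_k$ is nonrepetitive, and the sequence of colours of $e_1,\dots,e_{k-1}$ is nonrepetitive. $\pi_T(G)$ is the minimum number of colours in a total Thue colouring of $G$. *)

theory Defs
  imports Main
begin

definition nonrep :: "'c list \<Rightarrow> bool" where
  "nonrep s \<longleftrightarrow> \<not> (\<exists>xs r ys. r \<noteq> [] \<and> s = xs @ r @ r @ ys)"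

definition is_path :: "'v set \<Rightarrow> 'v set set \<Rightarrow> 'v list \<Rightarrow> bool" where
  "is_path V E vs \<longleftrightarrow> vs \<noteq> [] \<and> distinct vs \<and> set vs \<subseteq> V \<and>
     (\<forall>i. Suc i < length vs \<longrightarrow> {vs ! i, vs ! Suc i} \<in> E)"

definition path_edges :: "'v list \<Rightarrow> 'v set list" where
  "path_edges vs = map2 (\<lambda>a b. {a, b}) vs (tl vs)"

fun total_seq :: "('v \<Rightarrow> 'c) \<Rightarrow> ('v set \<Rightarrow> 'c) \<Rightarrow> 'v list \<Rightarrow> 'c list" where
  "total_seq cv ce [] = []"
| "total_seq cv ce [v] = [cv v]"
| "total_seq cv ce (v # w # vs) = cv v # ce {v, w} # total_seq cv ce (w # vs)"

text \<open>A (strong) total Thue colouring with at most k colours (colours 0..k-1):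
  vertices coloured by cv, edges by ce.\<close>
definition total_thue :: "'v set \<Rightarrow> 'v set set \<Rightarrow> ('v \<Rightarrow> nat) \<Rightarrow> ('v set \<Rightarrow> nat) \<Rightarrow> nat \<Rightarrow> bool" where
  "total_thue V E cv ce k \<longleftrightarrow>
     (\<forall>v\<in>V. cv v < k) \<and> (\<forall>e\<in>E. ce e < k) \<and>
     (\<forall>vs. is_path V E vs \<longrightarrow>
        nonrep (total_seq cv ce vs) \<and> nonrep (map cv vs) \<and> nonrep (map ce (path_edges vs)))"

definition total_thue_number :: "'v set \<Rightarrow> 'v set set \<Rightarrow> nat" where
  "total_thue_number V E = (LEAST k. \<exists>cv ce. total_thue V E cv ce k)"

definition path_V :: "nat \<Rightarrow> nat set" where
  "path_V n = {0..<n}"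

definition path_E :: "nat \<Rightarrow> nat set set" where
  "path_E n = {{i, Suc i} | i. Suc i < n}"

end

theory Submission imports Defs begin

fun tm :: "nat \<Rightarrow> bool" where
  "tm 0 = False"
| "tm (Suc n) = (tm (Suc n div 2) \<noteq> odd (Suc n))"

lemma tm_even: "tm (2*k) = tm k"
  by (cases k) auto

lemma tm_odd: "tm (2*k+1) = (\<not> tm k)"
  by simp

declare tm.simps(2)[simp del]

lemma tm_pair: "even m \<Longrightarrow> tm m \<noteq> tm (Suc m)"
  by (auto elim!: evenE simp: tm_even tm_odd[simplified])

lemma tm_overlap_free:
  "0 < p \<Longrightarrow> \<not> (\<forall>j\<le>p. tm (i+j) = tm (i+p+j))"
proof (induction p arbitrary: i rule: less_induct)
  case (less p)
  show ?case
  proof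
    assume H: "\<forall>j\<le>p. tm (i+j) = tm (i+p+j)"
    show False
    proof (cases "even p")
      case True
      then obtain q where pq: "p = 2*q" by (auto elim!: evenE)
      with less.prems have q: "0 < q" "q < p" by auto
      obtain k r where ik: "i = 2*k + r" and r: "r < 2"
        by (metis mod_less_divisor div_mult_mod_eq mult.commute zero_less_numeral)
      have "\<forall>l\<le>q. tm (k+l) = tm (k+q+l)"
      proof (intro allI impI)
        fix l assume "l \<le> q"
        hence "tm (i + 2*l) = tm (i + p + 2*l)" using H pq by auto
        hence "tm (2*(k+l) + r) = tm (2*(k+q+l) + r)" using ik pq
          by (simp add: algebra_simps)
        moreover have "r = 0 \<or> r = 1" using r by auto
        ultimately show "tm (k+l) = tm (k+q+l)"
          using tm_even[of "k+l"] tm_even[of "k+q+l"] tm_odd[of "k+l"] tm_odd[of "k+q+l"]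
          by auto
      qed
      thus False using less.IH[OF q(2) q(1)] by blast
    next
      case False
      have alt1: "tm (i+j) \<noteq> tm (i+j+1)" if "j < p" for j
      proof (cases "even (i+j)")
        case True thus ?thesis using tm_pair by simp
      next
        case False
        hence "even (i+p+j)" using \<open>odd p\<close> by simp
        hence "tm (i+p+j) \<noteq> tm (Suc (i+p+j))" by (rule tm_pair)
        moreover have "tm (i+j) = tm (i+p+j)" "tm (i+(j+1)) = tm (i+p+(j+1))"
          using H[rule_format, of j] H[rule_format, of "j+1"] that by auto
        ultimately show ?thesis by (simp add: add.assoc)
      qed
      have alt: "tm (i+j) \<noteq> tm (i+j+1)" if "j < 2*p" for j
      proof (cases "j < p")
        case True thus ?thesis using alt1 by simp
      next
        case False
        define j' where "j' = j - p"
        have j': "j = p + j'" "j' < p" using that False unfolding j'_def by auto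
        have "tm (i+j') = tm (i+p+j')" "tm (i+(j'+1)) = tm (i+p+(j'+1))"
          using H[rule_format, of j'] H[rule_format, of "j'+1"] j' by auto
        thus ?thesis using alt1[OF j'(2)] j' by (simp add: add.assoc)
      qed
      have "j \<le> 2*p \<Longrightarrow> tm (i+j) = (tm i \<noteq> odd j)" for j
      proof (induction j)
        case 0 thus ?case by simp
      next
        case (Suc j)
        thus ?case using alt[of j] by auto
      qed
      from this[of p] have "tm (i+p) = (\<not> tm i)" using False by simp
      moreover have "tm (i+0) = tm (i+p+0)" using H by blast
      ultimately show False by simp
    qed
  qed
qed


definition vx :: "nat \<Rightarrow> nat" where
  "vx m = (if tm m = tm (Suc m) then 1 else if tm m then 0 else 2)"

lemma vx_le: "vx m \<le> 2" by (simp add: vx_def)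

lemma vx_step_eq: "vx m = vx m' \<Longrightarrow> tm m = tm m' \<Longrightarrow> tm (Suc m) = tm (Suc m')"
  by (auto simp: vx_def split: if_splits)

lemma vx_step_ne: "vx m = vx m' \<Longrightarrow> tm m \<noteq> tm m' \<Longrightarrow> tm (Suc m) = tm m \<and> tm (Suc m') = tm m'"
  by (auto simp: vx_def split: if_splits)

lemma vx_sqfree: "0 < p \<Longrightarrow> \<not> (\<forall>j<p. vx (i+j) = vx (i+p+j))"
proof
  assume p: "0 < p" and H: "\<forall>j<p. vx (i+j) = vx (i+p+j)"
  show False
  proof (cases "tm i = tm (i+p)")
    case True
    have "j \<le> p \<Longrightarrow> tm (i+j) = tm (i+p+j)" for j
    proof (induction j)
      case 0 thus ?case using True by simp
    next
      case (Suc j)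
      thus ?case using vx_step_eq[of "i+j" "i+p+j"] H by auto
    qed
    thus False using tm_overlap_free[OF p, of i] by blast
  next
    case False
    have "j \<le> p \<Longrightarrow> tm (i+j) = tm i \<and> tm (i+p+j) = tm (i+p)" for j
    proof (induction j)
      case 0 thus ?case by simp
    next
      case (Suc j)
      thus ?case using vx_step_ne[of "i+j" "i+p+j"] H False by auto
    qed
    from this[of p] False show False by simp
  qed
qed

definition vy :: "nat \<Rightarrow> nat" where
  "vy m = (if vx m = 0 then 3 - vx (Suc m) else vx m + 2)"

lemma vx0_next: "vx m = 0 \<Longrightarrow> vx (Suc m) \<noteq> 0"
  by (auto simp: vx_def split: if_splits)

lemma vy_small: "vx m = 0 \<Longrightarrow> vy m \<le> 2 \<and> 1 \<le> vy m \<and> vy m \<noteq> vx (Suc m)"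
  using vx0_next[of m] vx_le[of "Suc m"] by (simp add: vy_def) arith

lemma vy_big: "vx m \<noteq> 0 \<Longrightarrow> vy m \<ge> 3"
  by (simp add: vy_def)

lemma vy_le: "vy m < 5"
  using vx_le[of m] by (auto simp: vy_def)

lemma vy_vx: "vy m = vy m' \<Longrightarrow> vx m = vx m'"
  using vy_small[of m] vy_small[of m'] vy_big[of m] vy_big[of m']
  by (cases "vx m = 0"; cases "vx m' = 0") (auto simp: vy_def)

lemma vy_sqfree: "0 < p \<Longrightarrow> \<not> (\<forall>j<p. vy (i+j) = vy (i+p+j))"
  using vx_sqfree[of p i] vy_vx by blast

definition vz :: "nat \<Rightarrow> nat" where
  "vz k = (if even k then vx (k div 2) else vy (k div 2))"

lemma vz_odd_aux:
  assumes "even m" "odd p" "vz m = vz (m+p)" "vz (Suc m) = vz (Suc m + p)"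
  shows False
proof -
  have "vz m = vx (m div 2)" "vz (m+p) = vy ((m+p) div 2)"
       "vz (Suc m) = vy (m div 2)" "vz (Suc m + p) = vx ((Suc m + p) div 2)"
    using assms(1,2) by (auto simp: vz_def elim!: evenE oddE)
  hence e1: "vx (m div 2) = vy ((m+p) div 2)" and e2: "vy (m div 2) = vx ((Suc m + p) div 2)"
    using assms by auto
  have "vx ((m+p) div 2) = 0"
    using e1 vy_big[of "(m+p) div 2"] vx_le[of "m div 2"] by (cases "vx ((m+p) div 2) = 0") auto
  hence "vx (m div 2) \<noteq> 0" using e1 vy_small[of "(m+p) div 2"] by auto
  hence "vy (m div 2) \<ge> 3" by (rule vy_big)
  thus False using e2 vx_le[of "(Suc m + p) div 2"] by auto
qed

lemma vz_sqfree: "0 < p \<Longrightarrow> \<not> (\<forall>j<p. vz (i+j) = vz (i+p+j))"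
proof
  assume p: "0 < p" and H: "\<forall>j<p. vz (i+j) = vz (i+p+j)"
  show False
  proof (cases "even p")
    case True
    then obtain q where pq: "p = 2*q" by (auto elim!: evenE)
    with p have q: "0 < q" by auto
    show False
    proof (cases "even i")
      case True
      then obtain a where ia: "i = 2*a" by (auto elim!: evenE)
      have "\<forall>l<q. vx (a+l) = vx (a+q+l)"
      proof (intro allI impI)
        fix l assume "l < q"
        hence "vz (i + 2*l) = vz (i+p+2*l)" using H pq by auto
        thus "vx (a+l) = vx (a+q+l)" using ia pq
          by (simp add: vz_def algebra_simps)
      qed
      thus False using vx_sqfree[OF q] by blast
    next
      case False
      then obtain a where ia: "i = 2*a+1" by (auto elim!: oddE)
      have "\<forall>l<q. vy (a+l) = vy (a+q+l)"
      proof (intro allI impI)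
        fix l assume "l < q"
        hence "vz (i + 2*l) = vz (i+p+2*l)" using H pq by auto
        moreover have "(2 * a + 1 + 2 * l) div 2 = a + l" "(2 * a + 1 + 2*q + 2 * l) div 2 = a + q + l"
          by presburger+
        ultimately show "vy (a+l) = vy (a+q+l)" using ia pq
          by (simp add: vz_def algebra_simps)
      qed
      thus False using vy_sqfree[OF q] by blast
    qed
  next
    case False
    show False
    proof (cases "even i")
      case True
      show False
      proof (cases "p = 1")
        case True
        have "vz i = vz (Suc i)" using H True by auto
        thus False using \<open>even i\<close> vy_small[of "i div 2"] vy_big[of "i div 2"] vx_le[of "i div 2"]
          by (cases "vx (i div 2) = 0") (auto simp: vz_def)
      next
        case False
        hence "1 < p" using p by auto
        hence "vz i = vz (i+p)" "vz (Suc i) = vz (Suc i + p)"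
          using H[rule_format, of 0] H[rule_format, of 1] by auto
        thus False using vz_odd_aux[of i p] \<open>even i\<close> \<open>odd p\<close> by blast
      qed
    next
      case False
      then obtain a where ia: "i = 2*a+1" by (auto elim!: oddE)
      show False
      proof (cases "p = 1")
        case True
        have "vz i = vz (Suc i)" using H True by auto
        moreover have "vz i = vy a" "vz (Suc i) = vx (Suc a)" using ia by (auto simp: vz_def)
        ultimately show False using vy_small[of a] vy_big[of a] vx_le[of "Suc a"]
          by (cases "vx a = 0") auto
      next
        case False
        hence "2 < p" using p \<open>odd p\<close> by presburger
        hence "vz (Suc i) = vz (Suc i+p)" "vz (Suc (Suc i)) = vz (Suc (Suc i) + p)"
          using H[rule_format, of 1] H[rule_format, of 2] by auto
        thus False using vz_odd_aux[of "Suc i" p] \<open>odd i\<close> \<open>odd p\<close> by auto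
      qed
    qed
  qed
qed


lemma nonrep_idx:
  assumes H: "\<And>i p. 0 < p \<Longrightarrow> \<not> (\<forall>j<p. f (i+j) = f (i+p+j))"
  shows "nonrep (map f [a..<b])"
  unfolding nonrep_def
proof
  assume "\<exists>xs r ys. r \<noteq> [] \<and> map f [a..<b] = xs @ r @ r @ ys"
  then obtain xs r ys where r: "r \<noteq> []" and eq: "map f [a..<b] = xs @ r @ r @ ys" by blast
  have len: "b - a = length xs + 2 * length r + length ys"
    using arg_cong[OF eq, of length] by simp
  have "\<forall>j<length r. f (a + length xs + j) = f (a + length xs + length r + j)"
  proof (intro allI impI)
    fix j assume j: "j < length r"
    have "map f [a..<b] ! (length xs + j) = r ! j" using j by (simp add: eq nth_append)
    moreover have "map f [a..<b] ! (length xs + length r + j) = r ! j" using j by (simp add: eq nth_append)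
    moreover have "map f [a..<b] ! (length xs + j) = f (a + length xs + j)"
      using j len by (simp add: add.assoc)
    moreover have "map f [a..<b] ! (length xs + length r + j) = f (a + length xs + length r + j)"
      using j len by (simp add: add.assoc)
    ultimately show "f (a + length xs + j) = f (a + length xs + length r + j)" by simp
  qed
  thus False using H[of "length r" "a + length xs"] r by simp
qed

lemma nonrep_rev: "nonrep (rev s) = nonrep s"
proof -
  have *: "nonrep t" if "nonrep (rev t)" for t :: "'a list"
  proof (unfold nonrep_def, rule notI)
    assume "\<exists>xs r ys. r \<noteq> [] \<and> t = xs @ r @ r @ ys"
    then obtain xs r ys where "r \<noteq> []" "t = xs @ r @ r @ ys" by blast
    hence "rev r \<noteq> [] \<and> rev t = rev ys @ rev r @ rev r @ rev xs" by simp
    thus False using that unfolding nonrep_def by blast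
  qed
  show ?thesis using *[of s] *[of "rev s"] by auto
qed

definition adj :: "nat list \<Rightarrow> bool" where
  "adj vs \<longleftrightarrow> (\<forall>i. Suc i < length vs \<longrightarrow> vs ! Suc i = Suc (vs ! i) \<or> vs ! i = Suc (vs ! Suc i))"

lemma path_shape:
  "vs \<noteq> [] \<Longrightarrow> distinct vs \<Longrightarrow> adj vs \<Longrightarrow> \<exists>a L. vs = [a..<a+Suc L] \<or> vs = rev [a..<a+Suc L]"
proof (induction vs)
  case Nil thus ?case by simp
next
  case (Cons v ws)
  show ?case
  proof (cases "ws = []")
    case True thus ?thesis by (rule_tac x=v in exI, rule_tac x=0 in exI) simp
  next
    case False
    have adjws: "adj ws" using Cons.prems(3) unfolding adj_def
      by (metis Suc_less_eq length_Cons nth_Cons_Suc)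
    have hv: "ws ! 0 = Suc v \<or> v = Suc (ws ! 0)"
      using Cons.prems(3) False unfolding adj_def by (metis length_Cons length_greater_0_conv nth_Cons_0 nth_Cons_Suc Suc_less_eq)
    have vn: "v \<notin> set ws" using Cons.prems(2) by simp
    from Cons.IH[OF False _ adjws] Cons.prems(2) obtain a L where
      ws: "ws = [a..<a+Suc L] \<or> ws = rev [a..<a+Suc L]" by auto
    thus ?thesis
    proof
      assume ws: "ws = [a..<a+Suc L]"
      hence w0: "ws ! 0 = a" by (simp del: upt_Suc add: upt_conv_Cons)
      from hv show ?thesis
      proof
        assume "ws ! 0 = Suc v"
        hence "v # ws = [v..<v + Suc (Suc L)]" using w0 ws by (simp del: upt_Suc add: upt_conv_Cons)
        thus ?thesis by blast
      next
        assume "v = Suc (ws ! 0)"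
        hence va: "v = Suc a" using w0 by simp
        hence "L = 0" using vn ws by auto
        hence "v # ws = rev [a..<a + Suc (Suc 0)]" using va ws by simp
        thus ?thesis by blast
      qed
    next
      assume ws: "ws = rev [a..<a+Suc L]"
      hence w0: "ws ! 0 = a + L" by (simp add: nth_Cons' rev_nth)
      from hv show ?thesis
      proof
        assume "ws ! 0 = Suc v"
        hence va: "a + L = Suc v" using w0 by simp
        hence "L = 0" using vn ws by auto
        hence "v # ws = [v..<v + Suc (Suc 0)]" using va ws by simp
        thus ?thesis by blast
      next
        assume "v = Suc (ws ! 0)"
        hence "v # ws = rev [a..<a + Suc (Suc L)]" using w0 ws by simp
        thus ?thesis by blast
      qed
    qed
  qed
qed


definition ce0 :: "nat set \<Rightarrow> nat" where "ce0 e = vy (Min e)"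

lemma ce0_up: "ce0 {k, Suc k} = vy k" by (simp add: ce0_def)
lemma ce0_down: "ce0 {Suc k, k} = vy k" by (simp add: ce0_def insert_commute)

lemma ts_cons: "vs \<noteq> [] \<Longrightarrow> total_seq cv ce (v # vs) = cv v # ce {v, hd vs} # total_seq cv ce vs"
  by (cases vs) auto

lemma pe_cons: "vs \<noteq> [] \<Longrightarrow> path_edges (v # vs) = {v, hd vs} # path_edges vs"
  by (cases vs) (auto simp: path_edges_def)

lemma pe_single: "path_edges [v] = []" by (simp add: path_edges_def)

lemma ts_up: "total_seq vx ce0 [a..<a+Suc L] = map vz [2*a..<2*a+2*L+1]"
proof (induction L arbitrary: a)
  case 0 thus ?case by (simp add: vz_def)
next
  case (Suc L)
  have "[a..<a+Suc (Suc L)] = a # [Suc a..<Suc a + Suc L]" by (simp del: upt_Suc add: upt_conv_Cons)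
  moreover have "[2*a..<2*a+2*Suc L+1] = 2*a # Suc (2*a) # [2*Suc a..<2*Suc a + 2*L+1]"
    by (simp del: upt_Suc add: upt_conv_Cons)
  ultimately show ?case using Suc[of "Suc a"]
    by (simp del: upt_Suc add: ts_cons vz_def ce0_up upt_conv_Cons)
qed

lemma upt_two: "i \<le> j \<Longrightarrow> [i..<Suc (Suc j)] = [i..<j] @ [j, Suc j]"
  by simp

lemma ts_down: "total_seq vx ce0 (rev [a..<a+Suc L]) = rev (map vz [2*a..<2*a+2*L+1])"
proof (induction L)
  case 0 thus ?case by (simp add: vz_def)
next
  case (Suc L)
  have e1: "rev [a..<a+Suc (Suc L)] = (a + Suc L) # rev [a..<a + Suc L]" by simp
  have h: "hd (rev [a..<a + Suc L]) = a + L" by simp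
  have "total_seq vx ce0 (rev [a..<a+Suc (Suc L)]) = vx (a+Suc L) # ce0 {a+Suc L, a+L} # total_seq vx ce0 (rev [a..<a+Suc L])"
    unfolding e1 by (subst ts_cons) (simp_all only: h, simp_all)
  also have "\<dots> = vz (2*a+2*L+2) # vz (2*a+2*L+1) # rev (map vz [2*a..<2*a+2*L+1])"
    using Suc.IH ce0_down[of "a+L"] by (simp add: vz_def)
  also have "\<dots> = rev (map vz ([2*a..<2*a+2*L+1] @ [2*a+2*L+1, 2*a+2*L+2]))" by simp
  also have "[2*a..<2*a+2*L+1] @ [2*a+2*L+1, 2*a+2*L+2] = [2*a..<2*a+2*Suc L+1]"
    using upt_two[of "2*a" "2*a+2*L+1"] by simp
  finally show ?case .
qed

lemma pe_down: "map ce0 (path_edges (rev [a..<a+Suc L])) = rev (map vy [a..<a+L])"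
proof (induction L)
  case 0 thus ?case by (simp add: pe_single)
next
  case (Suc L)
  have e1: "rev [a..<a+Suc (Suc L)] = (a + Suc L) # rev [a..<a + Suc L]" by simp
  have h: "hd (rev [a..<a + Suc L]) = a + L" by simp
  have "map ce0 (path_edges (rev [a..<a+Suc (Suc L)])) = ce0 {a+Suc L, a+L} # map ce0 (path_edges (rev [a..<a+Suc L]))"
    unfolding e1 by (subst pe_cons) (simp_all only: h, simp_all)
  also have "\<dots> = vy (a+L) # rev (map vy [a..<a+L])"
    using Suc.IH ce0_down[of "a+L"] by simp
  also have "\<dots> = rev (map vy [a..<a+Suc L])" by simp
  finally show ?case .
qed

lemma pe_up: "map ce0 (path_edges [a..<a+Suc L]) = map vy [a..<a+L]"
proof (induction L arbitrary: a)
  case 0 thus ?case by (simp add: pe_single)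
next
  case (Suc L)
  have "[a..<a+Suc (Suc L)] = a # [Suc a..<Suc a + Suc L]" by (simp del: upt_Suc add: upt_conv_Cons)
  moreover have "[a..<a+Suc L] = a # [Suc a..<Suc a + L]" by (simp del: upt_Suc add: upt_conv_Cons)
  ultimately show ?case using Suc[of "Suc a"]
    by (simp del: upt_Suc add: pe_cons ce0_up upt_conv_Cons)
qed


lemma nonrep_sq: "nonrep s \<Longrightarrow> 0 < p \<Longrightarrow> i + 2*p \<le> length s \<Longrightarrow> \<not> (\<forall>j<p. s!(i+j) = s!(i+p+j))"
proof
  assume nr: "nonrep s" and p: "0 < p" and l: "i + 2*p \<le> length s" and H: "\<forall>j<p. s!(i+j) = s!(i+p+j)"
  have eq: "take p (drop i s) = take p (drop (i+p) s)"
    using l H by (intro nth_equalityI) (auto simp: add.assoc)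
  have "s = take i s @ take p (drop i s) @ take p (drop (i+p) s) @ drop (i+p+p) s"
    using l by (metis append_take_drop_id drop_drop add.commute)
  hence "s = take i s @ take p (drop i s) @ take p (drop i s) @ drop (i+p+p) s"
    using eq by simp
  moreover have "take p (drop i s) \<noteq> []" using p l by simp
  ultimately show False using nr unfolding nonrep_def by blast
qed

lemma low7:
  fixes c0 c1 c2 c3 e0 e1 e2 :: nat
  assumes b: "c0 < 3" "c1 < 3" "c2 < 3" "c3 < 3" "e0 < 3" "e1 < 3" "e2 < 3"
    and n1: "nonrep [c0,e0,c1,e1,c2,e2,c3]" and n2: "nonrep [c0,c1,c2,c3]" and n3: "nonrep [e0,e1,e2]"
  shows False
proof -
  note S = All_less_Suc numeral_2_eq_2 numeral_3_eq_3
  have t1: "c0 \<noteq> e0" "e0 \<noteq> c1" "c1 \<noteq> e1" "e1 \<noteq> c2" "c2 \<noteq> e2" "e2 \<noteq> c3"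
    using nonrep_sq[OF n1, of 1 0] nonrep_sq[OF n1, of 1 1] nonrep_sq[OF n1, of 1 2]
      nonrep_sq[OF n1, of 1 3] nonrep_sq[OF n1, of 1 4] nonrep_sq[OF n1, of 1 5] by simp_all
  have t2: "\<not> (c0 = c1 \<and> e0 = e1)" "\<not> (e0 = e1 \<and> c1 = c2)" "\<not> (c1 = c2 \<and> e1 = e2)" "\<not> (e1 = e2 \<and> c2 = c3)"
    using nonrep_sq[OF n1, of 2 0] nonrep_sq[OF n1, of 2 1] nonrep_sq[OF n1, of 2 2]
      nonrep_sq[OF n1, of 2 3] by (auto simp: S)
  have t3: "\<not> (c0 = e1 \<and> e0 = c2 \<and> c1 = e2)" "\<not> (e0 = c2 \<and> c1 = e2 \<and> e1 = c3)"
    using nonrep_sq[OF n1, of 3 0] nonrep_sq[OF n1, of 3 1] by (auto simp: S)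
  have v1: "c0 \<noteq> c1" "c1 \<noteq> c2" "c2 \<noteq> c3" "\<not> (c0 = c2 \<and> c1 = c3)"
    using nonrep_sq[OF n2, of 1 0] nonrep_sq[OF n2, of 1 1] nonrep_sq[OF n2, of 1 2]
      nonrep_sq[OF n2, of 2 0] by (auto simp: S)
  have w1: "e0 \<noteq> e1" "e1 \<noteq> e2"
    using nonrep_sq[OF n3, of 1 0] nonrep_sq[OF n3, of 1 1] by simp_all
  have d: "x < 3 \<Longrightarrow> x = 0 \<or> x = 1 \<or> x = 2" for x :: nat by auto
  show False
    using d[OF b(1)] d[OF b(2)] d[OF b(3)] d[OF b(4)] d[OF b(5)] d[OF b(6)] d[OF b(7)] t1 t2 t3 v1 w1
    by (elim disjE) simp_all
qed


lemma path_adj: "is_path (path_V n) (path_E n) vs \<Longrightarrow> adj vs"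
  unfolding adj_def
proof (intro allI impI)
  fix i assume P: "is_path (path_V n) (path_E n) vs" and i: "Suc i < length vs"
  hence "{vs ! i, vs ! Suc i} \<in> path_E n" unfolding is_path_def by blast
  then obtain j where "{vs ! i, vs ! Suc i} = {j, Suc j}" unfolding path_E_def by blast
  thus "vs ! Suc i = Suc (vs ! i) \<or> vs ! i = Suc (vs ! Suc i)"
    by (auto simp: doubleton_eq_iff)
qed

lemma upper_paths: "is_path (path_V n) (path_E n) vs \<Longrightarrow> nonrep (total_seq vx ce0 vs) \<and> nonrep (map vx vs) \<and> nonrep (map ce0 (path_edges vs))"
proof -
  assume P: "is_path (path_V n) (path_E n) vs"
  hence "vs \<noteq> []" "distinct vs" unfolding is_path_def by auto
  then obtain a L where vs: "vs = [a..<a+Suc L] \<or> vs = rev [a..<a+Suc L]"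
    using path_shape path_adj[OF P] by blast
  have nz: "nonrep (map vz [i..<j])" for i j using nonrep_idx[OF vz_sqfree] by blast
  have nx: "nonrep (map vx [i..<j])" for i j using nonrep_idx[OF vx_sqfree] by blast
  have ny: "nonrep (map vy [i..<j])" for i j using nonrep_idx[OF vy_sqfree] by blast
  from vs show "nonrep (total_seq vx ce0 vs) \<and> nonrep (map vx vs) \<and> nonrep (map ce0 (path_edges vs))"
  proof
    assume vs: "vs = [a..<a+Suc L]"
    show ?thesis unfolding vs ts_up pe_up using nz nx ny by blast
  next
    assume vs: "vs = rev [a..<a+Suc L]"
    show ?thesis unfolding vs ts_down pe_down rev_map[symmetric] nonrep_rev using nz nx ny by blast
  qed
qed

lemma upper: "total_thue (path_V n) (path_E n) vx ce0 5"
proof -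
  have "vx v < 5" for v using vx_le[of v] by simp
  thus ?thesis unfolding total_thue_def using vy_le upper_paths by (auto simp: ce0_def)
qed

lemma lower:
  assumes T: "total_thue (path_V n) (path_E n) cv ce k" and k: "k \<le> 3" and n: "4 \<le> n"
  shows False
proof -
  let ?vs = "[0,1,2,3::nat]"
  have nth: "?vs ! i = i" if "i < 4" for i
    using that by (auto simp: less_Suc_eq numeral_eq_Suc)
  have P: "is_path (path_V n) (path_E n) ?vs"
    unfolding is_path_def
  proof (intro conjI allI impI)
    show "set ?vs \<subseteq> path_V n" using n by (auto simp: path_V_def)
  next
    fix i assume "Suc i < length ?vs"
    hence i: "Suc i < 4" by simp
    hence "{?vs ! i, ?vs ! Suc i} = {i, Suc i}" using nth[of i] nth[of "Suc i"] by simp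
    moreover have "Suc i < n" using i n by simp
    ultimately show "{?vs ! i, ?vs ! Suc i} \<in> path_E n" unfolding path_E_def by blast
  qed auto
  have vin: "v \<in> path_V n" if "v < 4" for v using that n by (simp add: path_V_def)
  have ein: "{i, Suc i} \<in> path_E n" if "i < 3" for i using that n unfolding path_E_def by force
  have cvb: "cv v < 3" if "v < 4" for v using T vin[OF that] k unfolding total_thue_def by fastforce
  have ceb: "ce {i, Suc i} < 3" if "i < 3" for i using T ein[OF that] k unfolding total_thue_def by fastforce
  have N: "nonrep (total_seq cv ce ?vs)" "nonrep (map cv ?vs)" "nonrep (map ce (path_edges ?vs))"
    using T P unfolding total_thue_def by blast+
  have "nonrep [cv 0, ce {0,1}, cv 1, ce {1,2}, cv 2, ce {2,3}, cv 3]"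
    using N(1) by simp
  moreover have "nonrep [cv 0, cv 1, cv 2, cv 3]" using N(2) by simp
  moreover have "nonrep [ce {0,1}, ce {1,2}, ce {2,3}]" using N(3) by (simp add: path_edges_def)
  moreover have "cv 0 < 3" "cv 1 < 3" "cv 2 < 3" "cv 3 < 3" using cvb by simp_all
  moreover have "ce {0,1} < 3" "ce {1,2} < 3" "ce {2,3} < 3"
    using ceb[of 0] ceb[of 1] ceb[of 2] by (simp_all add: numeral_eq_Suc)
  ultimately show False using low7 by blast
qed

theorem theorem14:
  fixes n :: nat
  assumes "n \<ge> 4"
  shows "4 \<le> total_thue_number (path_V n) (path_E n) \<and> total_thue_number (path_V n) (path_E n) \<le> 5"
proof -
  let ?P = "\<lambda>k. \<exists>cv ce. total_thue (path_V n) (path_E n) cv ce k"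
  have P5: "?P 5" using upper by blast
  have le: "(LEAST k. ?P k) \<le> 5" by (rule Least_le[of ?P, OF P5])
  have "?P (LEAST k. ?P k)" by (rule LeastI[of ?P, OF P5])
  then obtain cv ce where T: "total_thue (path_V n) (path_E n) cv ce (LEAST k. ?P k)" by blast
  have "\<not> (LEAST k. ?P k) \<le> 3" using lower[OF T _ assms] by blast
  thus ?thesis using le unfolding total_thue_number_def by simp
qed

end
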